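(* Every pAND net is sub-sound.
   Context: Petri nets and markings. A Petri net is a triple $(P,T,F)$ with $P$ a finite set of places, $T$ a finite set of transitions, $P\cap T=\emptyset$, and $F\subseteq (P\times T)\cup(T\times P)$. For a node $x$, $\bullet x=\{y\mid (y,x)\in F\}$, $x\bullet=\{y\mid (x,y)\in F\}$. A marking is a multiset over $P$ (a function $P\to\mathbb N$); sets of places are identified with bags of multiplicity one, $+,-,\le$ are pointwise, and $k.m$ is the sum of $k$ copies of $m$. Transition $t$ is enabled at $m$ iff $\bullet t\le m$, firing gives $m-\bullet t+t\bullet$, and $m\xrightarrow{*}m'$ denotes reachability by a finite (possibly empty) firing sequence. A pWF net is $(P,T,F,I,O)$ with $(P,T,F)$ a Petri net, $I,O\subseteq P$ non-empty (input/output places), every node reachable by a directed path from some node of $I$, and some node of $O$ reachable from every node. AND nets. An AND net is an acyclic WF net $(P,T,F,I,O)$ such that for every place $p$: (1) either $p\in I$ and $|\bullet p|=0$, or $p\notin I$ and $|\bullet p|=1$; and (2) either $p\in O$ and $|p\bullet|=0$, or $p\notin O$ and $|p\bullet|=1$. A pAND net is an AND net that is a pWF net. Sub-soundness. A pWF net is sub-sound if for all integers $k\ge k'\ge 0$ and every marking $m'$: if $k.I\xrightarrow{*}m'+k'.O$ then $m'\xrightarrow{*}(k-k').O$. *)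

theory Defs
  imports Main "HOL-Library.Multiset"
begin

text \<open>Nodes of a Petri net: places (Inl) and transitions (Inr); disjointness of
P and T is built into the sum type. The flow relation F is a relation on nodes.\<close>

type_synonym ('p,'t) node = "'p + 't"

definition petri_net :: "'p set \<Rightarrow> 't set \<Rightarrow> (('p,'t) node \<times> ('p,'t) node) set \<Rightarrow> bool" where
  "petri_net P T F \<longleftrightarrow> finite P \<and> finite T \<and>
     F \<subseteq> (Inl ` P \<times> Inr ` T) \<union> (Inr ` T \<times> Inl ` P)"

definition nodes :: "'p set \<Rightarrow> 't set \<Rightarrow> ('p,'t) node set" where
  "nodes P T = Inl ` P \<union> Inr ` T"

definition preset :: "(('p,'t) node \<times> ('p,'t) node) set \<Rightarrow> ('p,'t) node \<Rightarrow> ('p,'t) node set" where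
  "preset F x = {y. (y, x) \<in> F}"

definition postset :: "(('p,'t) node \<times> ('p,'t) node) set \<Rightarrow> ('p,'t) node \<Rightarrow> ('p,'t) node set" where
  "postset F x = {y. (x, y) \<in> F}"

definition pre_t :: "(('p,'t) node \<times> ('p,'t) node) set \<Rightarrow> 't \<Rightarrow> 'p multiset" where
  "pre_t F t = mset_set {p. (Inl p, Inr t) \<in> F}"

definition post_t :: "(('p,'t) node \<times> ('p,'t) node) set \<Rightarrow> 't \<Rightarrow> 'p multiset" where
  "post_t F t = mset_set {p. (Inr t, Inl p) \<in> F}"

definition fire_step :: "'t set \<Rightarrow> (('p,'t) node \<times> ('p,'t) node) set \<Rightarrow> 'p multiset \<Rightarrow> 'p multiset \<Rightarrow> bool" where
  "fire_step T F m m' \<longleftrightarrow> (\<exists>t\<in>T. pre_t F t \<subseteq># m \<and> m' = m - pre_t F t + post_t F t)"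

definition reach :: "'t set \<Rightarrow> (('p,'t) node \<times> ('p,'t) node) set \<Rightarrow> 'p multiset \<Rightarrow> 'p multiset \<Rightarrow> bool" where
  "reach T F = (fire_step T F)\<^sup>*\<^sup>*"

definition pWF_net :: "'p set \<Rightarrow> 't set \<Rightarrow> (('p,'t) node \<times> ('p,'t) node) set \<Rightarrow> 'p set \<Rightarrow> 'p set \<Rightarrow> bool" where
  "pWF_net P T F Inp Out \<longleftrightarrow> petri_net P T F \<and> Inp \<subseteq> P \<and> Out \<subseteq> P \<and> Inp \<noteq> {} \<and> Out \<noteq> {} \<and>
     (\<forall>x\<in>nodes P T. \<exists>i\<in>Inp. (Inl i, x) \<in> F\<^sup>*) \<and>
     (\<forall>x\<in>nodes P T. \<exists>q\<in>Out. (x, Inl q) \<in> F\<^sup>*)"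

definition AND_conditions :: "'p set \<Rightarrow> 't set \<Rightarrow> (('p,'t) node \<times> ('p,'t) node) set \<Rightarrow> 'p set \<Rightarrow> 'p set \<Rightarrow> bool" where
  "AND_conditions P T F Inp Out \<longleftrightarrow> acyclic F \<and>
     (\<forall>p\<in>P. ((p \<in> Inp \<and> card (preset F (Inl p)) = 0) \<or> (p \<notin> Inp \<and> card (preset F (Inl p)) = 1)) \<and>
             ((p \<in> Out \<and> card (postset F (Inl p)) = 0) \<or> (p \<notin> Out \<and> card (postset F (Inl p)) = 1)))"

definition pAND_net :: "'p set \<Rightarrow> 't set \<Rightarrow> (('p,'t) node \<times> ('p,'t) node) set \<Rightarrow> 'p set \<Rightarrow> 'p set \<Rightarrow> bool" where
  "pAND_net P T F Inp Out \<longleftrightarrow> pWF_net P T F Inp Out \<and> AND_conditions P T F Inp Out"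

definition sub_sound :: "'p set \<Rightarrow> 't set \<Rightarrow> (('p,'t) node \<times> ('p,'t) node) set \<Rightarrow> 'p set \<Rightarrow> 'p set \<Rightarrow> bool" where
  "sub_sound P T F Inp Out \<longleftrightarrow>
     (\<forall>k k' m'. k' \<le> k \<longrightarrow> set_mset m' \<subseteq> P \<longrightarrow>
        reach T F (repeat_mset k (mset_set Inp)) (m' + repeat_mset k' (mset_set Out)) \<longrightarrow>
        reach T F m' (repeat_mset (k - k') (mset_set Out)))"

end

theory Submission
  imports Defs
begin

locale pand =
  fixes P :: "'p set" and T :: "'t set" and F :: "(('p,'t) node \<times> ('p,'t) node) set"
    and Inp :: "'p set" and Out :: "'p set"
  assumes pand: "pAND_net P T F Inp Out"
begin

lemma finP: "finite P" and finT: "finite T"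
  and Fsub: "F \<subseteq> (Inl ` P \<times> Inr ` T) \<union> (Inr ` T \<times> Inl ` P)"
  and InpP: "Inp \<subseteq> P" and OutP: "Out \<subseteq> P"
  and acyc: "acyclic F"
  and deg: "\<forall>p\<in>P. ((p \<in> Inp \<and> card (preset F (Inl p)) = 0) \<or> (p \<notin> Inp \<and> card (preset F (Inl p)) = 1)) \<and>
             ((p \<in> Out \<and> card (postset F (Inl p)) = 0) \<or> (p \<notin> Out \<and> card (postset F (Inl p)) = 1))"
  and reachI: "\<forall>x\<in>nodes P T. \<exists>i\<in>Inp. (Inl i, x) \<in> F\<^sup>*"
  using pand unfolding pAND_net_def pWF_net_def petri_net_def AND_conditions_def by auto

lemma finF: "finite F"
  by (rule finite_subset[OF Fsub]) (simp add: finP finT)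

lemma wfF: "wf F" using finF acyc by (rule finite_acyclic_wf)

lemma F_pt: "(Inl p, Inr t) \<in> F \<Longrightarrow> p \<in> P \<and> t \<in> T" using Fsub by auto
lemma F_tp: "(Inr t, Inl p) \<in> F \<Longrightarrow> p \<in> P \<and> t \<in> T" using Fsub by auto
lemma F_pp: "(Inl p, Inl q) \<notin> F" using Fsub by auto
lemma F_tt: "(Inr p, Inr q) \<notin> F" using Fsub by auto

lemma fin_preset: "finite (preset F x)"
proof -
  have "preset F x \<subseteq> fst ` F" unfolding preset_def by force
  thus ?thesis using finF finite_subset by blast
qed

lemma fin_postset: "finite (postset F x)"
proof -
  have "postset F x \<subseteq> snd ` F" unfolding postset_def by force
  thus ?thesis using finF finite_subset by blast
qed

lemma no_prod: "p \<in> Inp \<Longrightarrow> (y, Inl p) \<notin> F"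
proof
  assume a: "p \<in> Inp" "(y, Inl p) \<in> F"
  then have "card (preset F (Inl p)) = 0" using deg InpP by auto
  then have "preset F (Inl p) = {}" using fin_preset by simp
  thus False using a unfolding preset_def by auto
qed

lemma no_cons: "p \<in> Out \<Longrightarrow> (Inl p, y) \<notin> F"
proof
  assume a: "p \<in> Out" "(Inl p, y) \<in> F"
  then have "card (postset F (Inl p)) = 0" using deg OutP by auto
  then have "postset F (Inl p) = {}" using fin_postset by simp
  thus False using a unfolding postset_def by auto
qed

lemma prod_set: assumes "p \<in> P" "p \<notin> Inp" shows "\<exists>t\<in>T. {t'. (Inr t', Inl p) \<in> F} = {t}"
proof -
  have "card (preset F (Inl p)) = 1" using deg assms by auto
  then obtain y where y: "preset F (Inl p) = {y}" by (rule card_1_singletonE)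
  then have "(y, Inl p) \<in> F" unfolding preset_def by auto
  then obtain t where t: "y = Inr t" "t \<in> T" by (cases y) (auto simp: F_pp dest: F_tp)
  have "{t'. (Inr t', Inl p) \<in> F} = {t}" using y t unfolding preset_def by auto
  thus ?thesis using t by auto
qed

lemma cons_set: assumes "p \<in> P" "p \<notin> Out" shows "\<exists>t\<in>T. {t'. (Inl p, Inr t') \<in> F} = {t}"
proof -
  have "card (postset F (Inl p)) = 1" using deg assms by auto
  then obtain y where y: "postset F (Inl p) = {y}" by (rule card_1_singletonE)
  then have "(Inl p, y) \<in> F" unfolding postset_def by auto
  then obtain t where t: "y = Inr t" "t \<in> T" by (cases y) (auto simp: F_pp dest: F_pt)
  have "{t'. (Inl p, Inr t') \<in> F} = {t}" using y t unfolding postset_def by auto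
  thus ?thesis using t by auto
qed

lemma fin_pre: "finite {p. (Inl p, Inr t) \<in> F}"
  by (rule finite_subset[OF _ finP]) (auto dest: F_pt)
lemma fin_post: "finite {p. (Inr t, Inl p) \<in> F}"
  by (rule finite_subset[OF _ finP]) (auto dest: F_tp)

lemma count_pre: "count (pre_t F t) p = (if (Inl p, Inr t) \<in> F then 1 else 0)"
  unfolding pre_t_def using fin_pre by (simp add: count_mset_set')
lemma count_post: "count (post_t F t) p = (if (Inr t, Inl p) \<in> F then 1 else 0)"
  unfolding post_t_def using fin_post by (simp add: count_mset_set')

definition prodsum :: "('t \<Rightarrow> nat) \<Rightarrow> 'p \<Rightarrow> nat" where
  "prodsum x p = (\<Sum>t\<in>{t. (Inr t, Inl p) \<in> F}. x t)"
definition conssum :: "('t \<Rightarrow> nat) \<Rightarrow> 'p \<Rightarrow> nat" where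
  "conssum x p = (\<Sum>t\<in>{t. (Inl p, Inr t) \<in> F}. x t)"
definition supp :: "nat \<Rightarrow> ('t \<Rightarrow> nat) \<Rightarrow> 'p \<Rightarrow> nat" where
  "supp k x p = (if p \<in> Inp then k else prodsum x p)"
definition rep :: "nat \<Rightarrow> ('t \<Rightarrow> nat) \<Rightarrow> 'p multiset \<Rightarrow> bool" where
  "rep k x m \<longleftrightarrow> (\<forall>p. if p \<in> P then count m p + conssum x p = supp k x p else count m p = 0)"

lemma fin_prods: "finite {t. (Inr t, Inl p) \<in> F}"
  by (rule finite_subset[OF _ finT]) (auto dest: F_tp)
lemma fin_conss: "finite {t. (Inl p, Inr t) \<in> F}"
  by (rule finite_subset[OF _ finT]) (auto dest: F_pt)

lemma sum_upd: fixes x :: "'t \<Rightarrow> nat" assumes "finite A"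
  shows "(\<Sum>s\<in>A. (x(t := x t + 1)) s) = (\<Sum>s\<in>A. x s) + (if t \<in> A then 1 else 0)"
proof (cases "t \<in> A")
  case True
  have e1: "(\<Sum>s\<in>A. (x(t := x t + 1)) s) = (x(t := x t + 1)) t + (\<Sum>s\<in>A-{t}. (x(t := x t + 1)) s)"
    using True assms by (simp add: sum.remove del: fun_upd_apply)
  have e2: "(\<Sum>s\<in>A-{t}. (x(t := x t + 1)) s) = (\<Sum>s\<in>A-{t}. x s)" by (rule sum.cong) auto
  have e3: "(\<Sum>s\<in>A. x s) = x t + (\<Sum>s\<in>A-{t}. x s)" using True assms by (simp add: sum.remove)
  have e4: "(x(t := x t + 1)) t = x t + 1" by simp
  show ?thesis by (simp only: if_P[OF True] e1 e2 e3 e4)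
next
  case False
  then show ?thesis by (simp, intro sum.cong) auto
qed


lemma init: "rep k (\<lambda>_. 0) (repeat_mset k (mset_set Inp))"
  unfolding rep_def supp_def conssum_def prodsum_def
  using InpP finite_subset[OF InpP finP] by (auto simp: count_mset_set')

lemma fire_rep: assumes r: "rep k x m" and t: "t \<in> T" and en: "pre_t F t \<subseteq># m"
  shows "rep k (x(t := x t + 1)) (m - pre_t F t + post_t F t)"
  unfolding rep_def
proof
  fix p
  define cp where "cp = (if (Inl p, Inr t) \<in> F then 1 else (0::nat))"
  define cq where "cq = (if (Inr t, Inl p) \<in> F then 1 else (0::nat))"
  have cpm: "cp \<le> count m p" using en count_pre[of t p] unfolding cp_def
    by (metis subseteq_mset_def)
  have cnt: "count (m - pre_t F t + post_t F t) p = count m p - cp + cq"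
    by (simp add: count_pre count_post cp_def cq_def)
  have cs: "conssum (x(t := x t + 1)) p = conssum x p + cp"
    unfolding conssum_def cp_def by (subst sum_upd[OF fin_conss]) simp
  have ps: "prodsum (x(t := x t + 1)) p = prodsum x p + cq"
    unfolding prodsum_def cq_def by (subst sum_upd[OF fin_prods]) simp
  have sp: "supp k (x(t := x t + 1)) p = supp k x p + cq"
    unfolding supp_def using ps no_prod cq_def by auto
  show "if p \<in> P then count (m - pre_t F t + post_t F t) p + conssum (x(t := x t + 1)) p = supp k (x(t := x t + 1)) p
        else count (m - pre_t F t + post_t F t) p = 0"
  proof (cases "p \<in> P")
    case True
    then have "count m p + conssum x p = supp k x p" using r unfolding rep_def by auto
    then show ?thesis using True cnt cs sp cpm by simp
  next
    case False
    then have "count m p = 0" "cp = 0" "cq = 0" using r unfolding rep_def cp_def cq_def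
      by (auto dest: F_pt F_tp)
    then show ?thesis using False cnt by simp
  qed
qed

lemma reach_rep: "reach T F (repeat_mset k (mset_set Inp)) m \<Longrightarrow> \<exists>x. rep k x m"
  unfolding reach_def
proof (induction rule: rtranclp_induct)
  case base then show ?case using init by blast
next
  case (step m1 m2)
  then obtain x where "rep k x m1" by blast
  moreover obtain t where "t \<in> T" "pre_t F t \<subseteq># m1" "m2 = m1 - pre_t F t + post_t F t"
    using step.hyps(2) unfolding fire_step_def by blast
  ultimately show ?case using fire_rep by blast
qed

lemma cons_sum: assumes "(Inl p, Inr t) \<in> F" shows "conssum x p = x t"
proof -
  have pP: "p \<in> P" using F_pt[OF assms] by simp
  have "p \<notin> Out" using no_cons assms by blast
  then obtain t' where "{t'. (Inl p, Inr t') \<in> F} = {t'}" using cons_set pP by blast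
  moreover then have "t' = t" using assms by auto
  ultimately show ?thesis unfolding conssum_def by simp
qed

lemma prod_sum: assumes "(Inr t, Inl p) \<in> F" shows "prodsum x p = x t"
proof -
  have pP: "p \<in> P" using F_tp[OF assms] by simp
  have "p \<notin> Inp" using no_prod assms by blast
  then obtain t' where "{t'. (Inr t', Inl p) \<in> F} = {t'}" using prod_set pP by blast
  moreover then have "t' = t" using assms by auto
  ultimately show ?thesis unfolding prodsum_def by simp
qed

lemma has_pre: assumes "t \<in> T" shows "\<exists>p. (Inl p, Inr t) \<in> F"
proof -
  have "Inr t \<in> nodes P T" using assms unfolding nodes_def by auto
  then obtain i where "(Inl i, Inr t) \<in> F\<^sup>*" using reachI by blast
  then obtain y where "(y, Inr t) \<in> F"
    by (metis rtranclE sum.distinct(1))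
  then show ?thesis by (cases y) (auto simp: F_tt)
qed

lemma bound_all: assumes r: "rep k x m"
  shows "(\<forall>t. n = Inr t \<longrightarrow> t \<in> T \<longrightarrow> x t \<le> k) \<and> (\<forall>p. n = Inl p \<longrightarrow> p \<in> P \<longrightarrow> supp k x p \<le> k)"
  using wfF
proof (induction n rule: wf_induct_rule)
  case (less n)
  show ?case
  proof (intro conjI allI impI)
    fix t assume n: "n = Inr t" and tT: "t \<in> T"
    obtain p where pt: "(Inl p, Inr t) \<in> F" using has_pre tT by blast
    have pP: "p \<in> P" using F_pt[OF pt] by simp
    have "supp k x p \<le> k" using less pt n pP by blast
    moreover have "count m p + conssum x p = supp k x p" using r pP unfolding rep_def by auto
    ultimately show "x t \<le> k" using cons_sum[OF pt] by simp
  next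
    fix p assume n: "n = Inl p" and pP: "p \<in> P"
    show "supp k x p \<le> k"
    proof (cases "p \<in> Inp")
      case True then show ?thesis unfolding supp_def by simp
    next
      case False
      then obtain t where tT: "t \<in> T" and ts: "{t'. (Inr t', Inl p) \<in> F} = {t}" using prod_set pP by blast
      then have tp: "(Inr t, Inl p) \<in> F" by auto
      have "x t \<le> k" using less tp n tT by blast
      then show ?thesis using False prod_sum[OF tp] unfolding supp_def by simp
    qed
  qed
qed

lemma bound: "rep k x m \<Longrightarrow> t \<in> T \<Longrightarrow> x t \<le> k"
  using bound_all[of k x m "Inr t"] by blast

lemma supp_bound: "rep k x m \<Longrightarrow> p \<in> P \<Longrightarrow> supp k x p \<le> k"
  using bound_all[of k x m "Inl p"] by blast

lemma progress: assumes r: "rep k x m" and ex: "t0 \<in> T" "x t0 < k"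
  shows "\<exists>t\<in>T. x t < k \<and> pre_t F t \<subseteq># m"
proof -
  let ?Q = "{Inr t | t. t \<in> T \<and> x t < k}"
  have "Inr t0 \<in> ?Q" using ex by blast
  from wfE_min[OF wf_trancl[OF wfF] this] obtain z where z: "z \<in> ?Q"
    and mn: "\<And>y. (y, z) \<in> F\<^sup>+ \<Longrightarrow> y \<notin> ?Q" by blast
  then obtain t where zt: "z = Inr t" and tT: "t \<in> T" and lt: "x t < k" by blast
  have "pre_t F t \<subseteq># m"
    unfolding subseteq_mset_def
  proof
    fix p
    show "count (pre_t F t) p \<le> count m p"
    proof (cases "(Inl p, Inr t) \<in> F")
      case False then show ?thesis by (simp add: count_pre)
    next
      case pt: True
      have pP: "p \<in> P" using F_pt[OF pt] by simp
      have eq: "count m p + x t = supp k x p" using r pP cons_sum[OF pt, of x] unfolding rep_def by (metis (full_types))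
      have "x t < supp k x p"
      proof (cases "p \<in> Inp")
        case True then show ?thesis using lt unfolding supp_def by simp
      next
        case False
        then obtain t' where t'T: "t' \<in> T" and ts: "{t''. (Inr t'', Inl p) \<in> F} = {t'}" using prod_set pP by blast
        then have tp: "(Inr t', Inl p) \<in> F" by auto
        have "(Inr t', z) \<in> F\<^sup>+" using tp pt zt by (meson trancl.simps)
        then have "Inr t' \<notin> ?Q" using mn by blast
        then have "x t' \<ge> k" using t'T by force
        then show ?thesis using lt False prod_sum[OF tp] unfolding supp_def by simp
      qed
      then have "count m p \<ge> 1" using eq by linarith
      then show ?thesis using pt by (simp add: count_pre)
    qed
  qed
  then show ?thesis using tT lt by blast
qed

lemma finish: assumes r: "rep k x m" and all: "\<forall>t\<in>T. x t = k"
  shows "m = repeat_mset k (mset_set Out)"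
proof (rule multiset_eqI)
  fix p
  show "count m p = count (repeat_mset k (mset_set Out)) p"
  proof (cases "p \<in> P")
    case False
    then show ?thesis using r OutP unfolding rep_def by (auto simp: count_mset_set')
  next
    case pP: True
    have sp: "supp k x p = k"
    proof (cases "p \<in> Inp")
      case True then show ?thesis unfolding supp_def by simp
    next
      case False
      then obtain t' where t'T: "t' \<in> T" and ts: "{t''. (Inr t'', Inl p) \<in> F} = {t'}" using prod_set pP by blast
      then have tp: "(Inr t', Inl p) \<in> F" by auto
      then show ?thesis using False prod_sum[OF tp] all t'T unfolding supp_def by simp
    qed
    have cs: "conssum x p = (if p \<in> Out then 0 else k)"
    proof (cases "p \<in> Out")
      case True
      then have "{t. (Inl p, Inr t) \<in> F} = {}" using no_cons by blast
      then show ?thesis using True unfolding conssum_def by simp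
    next
      case False
      then obtain t' where t'T: "t' \<in> T" and ts: "{t''. (Inl p, Inr t'') \<in> F} = {t'}" using cons_set pP by blast
      then have tp: "(Inl p, Inr t') \<in> F" by auto
      then show ?thesis using False cons_sum[OF tp] all t'T by simp
    qed
    have "count m p + conssum x p = supp k x p" using r pP unfolding rep_def by auto
    then show ?thesis using sp cs finite_subset[OF OutP finP] by (auto simp: count_mset_set')
  qed
qed

lemma drive_n: "\<forall>x m. (\<Sum>t\<in>T. k - x t) = n \<longrightarrow> rep k x m \<longrightarrow> reach T F m (repeat_mset k (mset_set Out))"
proof (induction n rule: less_induct)
  case (less n)
  show ?case
  proof (intro allI impI)
    fix x m assume n: "(\<Sum>t\<in>T. k - x t) = n" and r: "rep k x m"
    show "reach T F m (repeat_mset k (mset_set Out))"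
    proof (cases "\<forall>t\<in>T. x t = k")
      case True
      then show ?thesis using finish[OF r] unfolding reach_def by simp
    next
      case False
      then obtain t0 where "t0 \<in> T" "x t0 < k" using bound[OF r] le_neq_implies_less by blast
      then obtain t where tT: "t \<in> T" and lt: "x t < k" and en: "pre_t F t \<subseteq># m"
        using progress[OF r] by blast
      define x' where "x' = x(t := x t + 1)"
      define m2 where "m2 = m - pre_t F t + post_t F t"
      have r2: "rep k x' m2" unfolding x'_def m2_def by (rule fire_rep[OF r tT en])
      have fs: "fire_step T F m m2" unfolding fire_step_def m2_def using tT en by blast
      have "(\<Sum>t\<in>T. k - x t) = (k - x t) + (\<Sum>s\<in>T-{t}. k - x s)"
        using tT finT by (simp add: sum.remove)
      moreover have "(\<Sum>t\<in>T. k - x' t) = (k - x' t) + (\<Sum>s\<in>T-{t}. k - x' s)"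
        using tT finT by (simp add: sum.remove)
      moreover have "(\<Sum>s\<in>T-{t}. k - x' s) = (\<Sum>s\<in>T-{t}. k - x s)"
        unfolding x'_def by (rule sum.cong) auto
      ultimately have "(\<Sum>t\<in>T. k - x' t) < n" using n lt unfolding x'_def by simp
      then have "reach T F m2 (repeat_mset k (mset_set Out))" using less r2 by blast
      then show ?thesis using fs unfolding reach_def by (meson converse_rtranclp_into_rtranclp)
    qed
  qed
qed

lemma drive: "rep k x m \<Longrightarrow> reach T F m (repeat_mset k (mset_set Out))"
  using drive_n by blast

lemma pre_not_out: "count (pre_t F t) p > 0 \<Longrightarrow> p \<notin> Out"
  using no_cons by (auto simp: count_pre split: if_splits)

lemma strip: assumes "reach T F (m + A) M" and A: "set_mset A \<subseteq> Out"
  shows "\<exists>M'. M = M' + A \<and> reach T F m M'"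
  using assms(1) unfolding reach_def
proof (induction rule: rtranclp_induct)
  case base then show ?case by auto
next
  case (step M1 M2)
  then obtain M' where M1: "M1 = M' + A" and rM: "(fire_step T F)\<^sup>*\<^sup>* m M'" by blast
  obtain t where tT: "t \<in> T" and en: "pre_t F t \<subseteq># M1" and M2: "M2 = M1 - pre_t F t + post_t F t"
    using step.hyps(2) unfolding fire_step_def by blast
  have zero: "\<And>p. count (pre_t F t) p > 0 \<Longrightarrow> count A p = 0"
    using pre_not_out A by (meson count_eq_zero_iff subsetD)
  have en': "pre_t F t \<subseteq># M'"
    unfolding subseteq_mset_def
  proof
    fix p
    have "count (pre_t F t) p \<le> count M' p + count A p" using en M1 by (simp add: subseteq_mset_def)
    then show "count (pre_t F t) p \<le> count M' p" using zero[of p] by (cases "count (pre_t F t) p = 0") auto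
  qed
  have "M2 = (M' - pre_t F t + post_t F t) + A"
  proof (rule multiset_eqI)
    fix p
    have "count (pre_t F t) p \<le> count M' p" using en' by (simp add: subseteq_mset_def)
    then show "count M2 p = count (M' - pre_t F t + post_t F t + A) p"
      using M2 M1 by simp
  qed
  moreover have "(fire_step T F)\<^sup>*\<^sup>* m (M' - pre_t F t + post_t F t)"
    by (rule rtranclp.rtrancl_into_rtrancl[OF rM]) (use tT en' in \<open>auto simp: fire_step_def\<close>)
  ultimately show ?case by blast
qed

lemma sound: "sub_sound P T F Inp Out"
  unfolding sub_sound_def
proof (intro allI impI)
  fix k k' m'
  assume kk: "k' \<le> k" and r: "reach T F (repeat_mset k (mset_set Inp)) (m' + repeat_mset k' (mset_set Out))"
  obtain x where "rep k x (m' + repeat_mset k' (mset_set Out))" using reach_rep[OF r] by blast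
  then have "reach T F (m' + repeat_mset k' (mset_set Out)) (repeat_mset k (mset_set Out))" by (rule drive)
  moreover have "set_mset (repeat_mset k' (mset_set Out)) \<subseteq> Out"
    by (metis count_mset_set(3) count_repeat_mset mult_zero_right count_eq_zero_iff subsetI)
  ultimately obtain M' where M': "repeat_mset k (mset_set Out) = M' + repeat_mset k' (mset_set Out)"
    and rM: "reach T F m' M'" using strip by blast
  have "M' = repeat_mset (k - k') (mset_set Out)"
  proof (rule multiset_eqI)
    fix p
    have "count (repeat_mset k (mset_set Out)) p = count M' p + count (repeat_mset k' (mset_set Out)) p"
      using M' by simp
    then show "count M' p = count (repeat_mset (k - k') (mset_set Out)) p"
      by (simp add: diff_mult_distrib)
  qed
  then show "reach T F m' (repeat_mset (k - k') (mset_set Out))" using rM by simp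
qed

end

theorem mainTheorem18:
  assumes "pAND_net P T F Inp Out"
  shows "sub_sound P T F Inp Out"
  using pand.sound[OF pand.intro[OF assms]] .

end
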